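(* Let $D$ be a finite set with $|D|\ge2$, $k\ge2$, and let $P:D^k\to\{0,1\}$ be a $k$-ary predicate with $P^{-1}(1)=\{(a,a,\dots,a)\}$ for some $a\in D$. Then for every weighted directed $k$-uniform hypergraph $H=(V,E,w)$, every $0<\varepsilon<1$, and every $\varepsilon$-$P$-sparsifier $H_\varepsilon=(V,E_\varepsilon,w_\varepsilon)$ of $H$, we have $|E_\varepsilon|=\Omega(|E|)$, with the implied constant independent of $H$ and $\varepsilon$.
   Context: A weighted directed $k$-uniform hypergraph $H=(V,E,w)$ has $E$ a set of ordered $k$-tuples of distinct vertices and $w:E\to\mathbb{R}_{>0}$. For $A:V\to D$, $\mathrm{Val}_{H,P}(A)=\sum_{e\in E}w(e)P(A(e))$ with $A$ applied entrywise. An $\varepsilon$-$P$-sparsifier of $H$ is $H_\varepsilon=(V,E_\varepsilon,w_\varepsilon)$ with $E_\varepsilon\subseteq E$, $w_\varepsilon:E_\varepsilon\to\mathbb{R}_{>0}$, such that for every $A:V\to D$, $(1-\varepsilon)\mathrm{Val}_{H,P}(A)\le\mathrm{Val}_{H_\varepsilon,P}(A)\le(1+\varepsilon)\mathrm{Val}_{H,P}(A)$. *)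

theory Defs
  imports Main "HOL.Real"
begin

definition wdhg :: "nat \<Rightarrow> 'v set \<Rightarrow> 'v list set \<Rightarrow> ('v list \<Rightarrow> real) \<Rightarrow> bool" where
  "wdhg k V E w \<longleftrightarrow> finite V \<and>
     (\<forall>e\<in>E. length e = k \<and> distinct e \<and> set e \<subseteq> V \<and> w e > 0)"

definition val :: "'v list set \<Rightarrow> ('v list \<Rightarrow> real) \<Rightarrow> ('d list \<Rightarrow> real) \<Rightarrow> ('v \<Rightarrow> 'd) \<Rightarrow> real" where
  "val E w P A = (\<Sum>e\<in>E. w e * P (map A e))"

definition is_sparsifier ::
  "'d set \<Rightarrow> ('d list \<Rightarrow> real) \<Rightarrow> real \<Rightarrow> 'v set \<Rightarrow> 'v list set \<Rightarrow> ('v list \<Rightarrow> real)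
   \<Rightarrow> 'v list set \<Rightarrow> ('v list \<Rightarrow> real) \<Rightarrow> bool" where
  "is_sparsifier D P \<epsilon> V E w Ee we \<longleftrightarrow> Ee \<subseteq> E \<and> (\<forall>e\<in>Ee. we e > 0) \<and>
     (\<forall>A :: 'v \<Rightarrow> 'd. A ` V \<subseteq> D \<longrightarrow>
        (1 - \<epsilon>) * val E w P A \<le> val Ee we P A \<and> val Ee we P A \<le> (1 + \<epsilon>) * val E w P A)"

end

theory Submission
  imports Defs
begin

lemma key:
  fixes D :: "'d set" and P :: "'d list \<Rightarrow> real" and k :: nat and a b :: 'd
  assumes "a \<in> D" "b \<in> D" "b \<noteq> a"
    and P01: "\<forall>x. length x = k \<and> set x \<subseteq> D \<longrightarrow> P x \<in> {0, 1}"
    and P1: "\<forall>x. length x = k \<and> set x \<subseteq> D \<longrightarrow> (P x = 1 \<longleftrightarrow> x = replicate k a)"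
    and H: "wdhg k V E w" "\<epsilon> < 1" "is_sparsifier D P \<epsilon> V E w Ee we"
    and e: "e \<in> E"
  shows "\<exists>f\<in>Ee. set f = set e"
proof -
  define A where "A = (\<lambda>x. if x \<in> set e then a else b)"
  have AV: "A ` V \<subseteq> D" using assms by (auto simp: A_def)
  have fin: "finite E"
    by (rule finite_subset[OF _ finite_lists_length_eq[of V k]]) (use H in \<open>auto simp: wdhg_def\<close>)
  have EeE: "Ee \<subseteq> E" and wepos: "\<forall>f\<in>Ee. we f > 0" using H by (auto simp: is_sparsifier_def)
  have LD: "length (map A f) = k \<and> set (map A f) \<subseteq> D" if "f \<in> E" for f
  proof -
    have "length f = k" "set f \<subseteq> V" using H that unfolding wdhg_def by auto
    thus ?thesis using AV by auto
  qed
  have Pin: "P (map A f) \<in> {0,1}" if "f \<in> E" for f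
    using P01 LD[OF that] by blast
  have Peq: "P (map A f) = 1 \<longleftrightarrow> map A f = replicate k a" if "f \<in> E" for f
    using P1 LD[OF that] by blast
  have ek: "length e = k" using H e by (auto simp: wdhg_def)
  have "map A e = replicate k a" using ek by (auto simp: A_def intro: replicate_eqI)
  hence Pe: "P (map A e) = 1" using Peq[OF e] by blast
  have nonneg: "0 \<le> w f * P (map A f)" if "f \<in> E" for f
    using Pin[OF that] H that by (auto simp: wdhg_def less_imp_le)
  have "w e * P (map A e) \<le> val E w P A"
    unfolding val_def using fin e nonneg by (intro member_le_sum) auto
  moreover have "w e > 0" using H e by (auto simp: wdhg_def)
  ultimately have vpos: "val E w P A > 0" using Pe by simp
  have "(1 - \<epsilon>) * val E w P A \<le> val Ee we P A" using H AV by (auto simp: is_sparsifier_def)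
  moreover have "(1 - \<epsilon>) * val E w P A > 0" using vpos H by simp
  ultimately have "val Ee we P A \<noteq> 0" by linarith
  then obtain f where f: "f \<in> Ee" "we f * P (map A f) \<noteq> 0"
    unfolding val_def by (meson sum.neutral)
  have fE: "f \<in> E" using f EeE by auto
  have "P (map A f) = 1" using f Pin[OF fE] by auto
  hence "map A f = replicate k a" using Peq fE by simp
  have sub: "set f \<subseteq> set e"
  proof
    fix x assume "x \<in> set f"
    hence "A x \<in> set (map A f)" by simp
    also have "set (map A f) \<subseteq> {a}" using \<open>map A f = replicate k a\<close> by (simp add: set_replicate_conv_if)
    finally have "A x = a" by simp
    thus "x \<in> set e" using assms(3) unfolding A_def by (auto split: if_splits)
  qed
  have "card (set f) = card (set e)"
    using H fE e by (auto simp: wdhg_def distinct_card)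
  hence "set f = set e" using sub by (simp add: card_subset_eq)
  thus ?thesis using f by blast
qed

theorem proposition18:
  fixes D :: "'d set" and P :: "'d list \<Rightarrow> real" and k :: nat and a :: 'd
  assumes "finite D" and "card D \<ge> 2" and "k \<ge> 2" and "a \<in> D"
    and "\<forall>x. length x = k \<and> set x \<subseteq> D \<longrightarrow> P x \<in> {0, 1}"
    and "\<forall>x. length x = k \<and> set x \<subseteq> D \<longrightarrow> (P x = 1 \<longleftrightarrow> x = replicate k a)"
  shows "\<exists>c > 0. \<forall>(V :: 'v set) E w \<epsilon> Ee we.
           wdhg k V E w \<and> 0 < \<epsilon> \<and> \<epsilon> < 1 \<and> is_sparsifier D P \<epsilon> V E w Ee we
           \<longrightarrow> real (card Ee) \<ge> c * real (card E)"
proof -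
  obtain b where b: "b \<in> D" "b \<noteq> a"
  proof -
    have "D - {a} \<noteq> {}"
    proof
      assume "D - {a} = {}"
      hence "D \<subseteq> {a}" by blast
      hence "card D \<le> 1" using card_mono[of "{a}" D] by simp
      thus False using assms(2) by simp
    qed
    thus ?thesis using that by blast
  qed
  show ?thesis
  proof (intro exI[of _ "1 / real k ^ k"] conjI allI impI)
    show "0 < 1 / real k ^ k" using assms(3) by simp
    fix V :: "'v set" and E w \<epsilon> Ee we
    assume H: "wdhg k V E w \<and> 0 < \<epsilon> \<and> \<epsilon> < 1 \<and> is_sparsifier D P \<epsilon> V E w Ee we"
    have fin: "finite E"
      by (rule finite_subset[OF _ finite_lists_length_eq[of V k]]) (use H in \<open>auto simp: wdhg_def\<close>)
    have EeE: "Ee \<subseteq> E" using H by (auto simp: is_sparsifier_def)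
    hence finEe: "finite Ee" using fin finite_subset by blast
    define S where "S f = {xs. set xs \<subseteq> set f \<and> length xs = k}" for f :: "'v list"
    have "E \<subseteq> (\<Union>f\<in>Ee. S f)"
    proof
      fix e assume e: "e \<in> E"
      obtain f where "f \<in> Ee" "set f = set e"
        using key[OF assms(4) b assms(5,6) _ _ _ e, of V w \<epsilon> Ee we] H by blast
      thus "e \<in> (\<Union>f\<in>Ee. S f)" using H e by (auto simp: S_def wdhg_def)
    qed
    hence "card E \<le> card (\<Union>f\<in>Ee. S f)"
      by (rule card_mono[rotated]) (auto simp: S_def finEe intro!: finite_lists_length_eq)
    also have "\<dots> \<le> (\<Sum>f\<in>Ee. card (S f))" by (rule card_UN_le[OF finEe])
    also have "\<dots> = (\<Sum>f\<in>Ee. k ^ k)"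
    proof (rule sum.cong[OF refl])
      fix f assume "f \<in> Ee"
      hence "card (set f) = k" using H EeE by (auto simp: wdhg_def distinct_card)
      thus "card (S f) = k ^ k" unfolding S_def by (simp add: card_lists_length_eq)
    qed
    also have "\<dots> = card Ee * k ^ k" by simp
    finally have "real (card E) \<le> real (card Ee) * real k ^ k"
      by (metis of_nat_le_iff of_nat_mult of_nat_power)
    thus "real (card Ee) \<ge> 1 / real k ^ k * real (card E)"
      using assms(3) by (simp add: field_simps)
  qed
qed

end
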